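(* Let $f(x,y)=\mathbb{E}_{\xi\sim\mathcal{D}}[f(x,y;\xi)]$ on $\mathbb{R}^d\times\mathbb{R}^p$, $F(x)=\max_y f(x,y)$, and assume: (A1) there is $\mu>0$ such that for every $x$ the set $\arg\max_y f(x,y)$ is nonempty and $\|\nabla_y f(x,y)\|^2\ge2\mu\big(\max_{y'}f(x,y')-f(x,y)\big)$ for all $y$; (A2) for every $\xi$, $\nabla_x f(\cdot,\cdot;\xi)$ and $\nabla_y f(\cdot,\cdot;\xi)$ are $L_f$-Lipschitz in each of the arguments $x$ and $y$ separately. Let $\{x_t,y_t,\tilde x_t,\tilde y_t,v_t\}$ be generated by the MSGDA algorithm (see context). If $0<\gamma\le\frac{\lambda\mu}{16L}$ and $0<\lambda\le\frac{1}{2L_f\eta_t}$ for all $t\ge1$, then for all $t\ge1$, $$F(x_{t+1})-f(x_{t+1},y_{t+1})\le\Big(1-\frac{\eta_t\lambda\mu}{2}\Big)\big(F(x_t)-f(x_t,y_t)\big)+\frac{\eta_t}{8\gamma}\|\tilde x_{t+1}-x_t\|^2-\frac{\eta_t}{4\lambda}\|\tilde y_{t+1}-y_t\|^2+\eta_t\lambda\|\nabla_y f(x_t,y_t)-v_t\|^2,$$ where $F(x_t)=f(x_t,y^*(x_t))$ with $y^*(x_t)\in\arg\max_y f(x_t,y)$.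
   Context: $\kappa=L_f/\mu$, $L=L_f(1+\kappa/2)$. MSGDA algorithm: given constants $\gamma,\lambda>0$, sequences $\eta_t>0$ and $\alpha_t,\beta_t\in(0,1]$, initial points $x_1,y_1$, and samples $\xi_1,\xi_2,\dots$ drawn i.i.d. from $\mathcal{D}$: set $v_1=\nabla_y f(x_1,y_1;\xi_1)$, $w_1=\nabla_x f(x_1,y_1;\xi_1)$, and for $t\ge1$: $\tilde y_{t+1}=y_t+\lambda v_t$, $\tilde x_{t+1}=x_t-\gamma w_t$; $y_{t+1}=y_t+\eta_t(\tilde y_{t+1}-y_t)$, $x_{t+1}=x_t+\eta_t(\tilde x_{t+1}-x_t)$; $v_{t+1}=\nabla_y f(x_{t+1},y_{t+1};\xi_{t+1})+(1-\alpha_{t+1})[v_t-\nabla_y f(x_t,y_t;\xi_{t+1})]$; $w_{t+1}=\nabla_x f(x_{t+1},y_{t+1};\xi_{t+1})+(1-\beta_{t+1})[w_t-\nabla_x f(x_t,y_t;\xi_{t+1})]$. *)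

theory Defs
  imports "HOL-Analysis.Analysis" "HOL-Probability.Probability"
begin

definition gradx :: "('x::real_inner \<Rightarrow> 'y \<Rightarrow> real) \<Rightarrow> 'x \<Rightarrow> 'y \<Rightarrow> 'x" where
  "gradx g x y = (SOME D. GDERIV (\<lambda>u. g u y) x :> D)"

definition grady :: "('x \<Rightarrow> 'y::real_inner \<Rightarrow> real) \<Rightarrow> 'x \<Rightarrow> 'y \<Rightarrow> 'y" where
  "grady g x y = (SOME D. GDERIV (\<lambda>u. g x u) y :> D)"

definition expf :: "'xi measure \<Rightarrow> ('xi \<Rightarrow> 'x \<Rightarrow> 'y \<Rightarrow> real) \<Rightarrow> 'x \<Rightarrow> 'y \<Rightarrow> real" where
  "expf D fs x y = (\<integral>\<xi>. fs \<xi> x y \<partial>D)"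

definition maxf :: "('x \<Rightarrow> 'y \<Rightarrow> real) \<Rightarrow> 'x \<Rightarrow> real" where
  "maxf f x = (SUP y. f x y)"

end

theory Submission
  imports Defs
begin


lemma deriv_line:
  fixes \<phi> :: "'a::real_inner \<Rightarrow> real"
  assumes d: "\<And>u. GDERIV \<phi> u :> G u"
  shows "((\<lambda>t. \<phi> (u + t *\<^sub>R h)) has_real_derivative (G (u + t *\<^sub>R h) \<bullet> h)) (at t)"
proof -
  have l: "((\<lambda>t. u + t *\<^sub>R h) has_derivative (\<lambda>t. t *\<^sub>R h)) (at t)"
    by (auto intro!: derivative_eq_intros)
  have "((\<lambda>t. \<phi> (u + t *\<^sub>R h)) has_derivative (\<lambda>k. (k *\<^sub>R h) \<bullet> G (u + t *\<^sub>R h))) (at t)"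
    using has_derivative_compose[OF l d[of "u + t *\<^sub>R h", unfolded gderiv_def]] by simp
  moreover have "(\<lambda>k. (k *\<^sub>R h) \<bullet> G (u + t *\<^sub>R h)) = (*) (G (u + t *\<^sub>R h) \<bullet> h)"
    by (auto simp: inner_commute mult.commute)
  ultimately show ?thesis by (simp add: has_field_derivative_def)
qed

lemma quad_bound:
  fixes \<phi> :: "'a::real_inner \<Rightarrow> real"
  assumes d: "\<And>u. GDERIV \<phi> u :> G u" and L: "L-lipschitz_on UNIV G"
  shows "\<bar>\<phi> (u + h) - \<phi> u - G u \<bullet> h\<bar> \<le> L/2 * (norm h)\<^sup>2"
proof -
  have lip: "\<bar>(G (u + t *\<^sub>R h) - G u) \<bullet> h\<bar> \<le> L * t * (norm h)\<^sup>2" if "0 \<le> t" for t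
  proof -
    have "\<bar>(G (u + t *\<^sub>R h) - G u) \<bullet> h\<bar> \<le> norm (G (u + t *\<^sub>R h) - G u) * norm h"
      by (rule Cauchy_Schwarz_ineq2)
    also have "\<dots> \<le> (L * norm (t *\<^sub>R h)) * norm h"
      using lipschitz_on_normD[OF L, of "u + t *\<^sub>R h" u] by (simp add: mult_right_mono)
    also have "\<dots> = L * t * (norm h)\<^sup>2" using that by (simp add: power2_eq_square)
    finally show ?thesis .
  qed
  define w1 where "w1 t = \<phi> (u + t *\<^sub>R h) - t * (G u \<bullet> h) - L/2 * t\<^sup>2 * (norm h)\<^sup>2" for t
  define w2 where "w2 t = \<phi> (u + t *\<^sub>R h) - t * (G u \<bullet> h) + L/2 * t\<^sup>2 * (norm h)\<^sup>2" for t
  have D1: "(w1 has_real_derivative (G (u + t *\<^sub>R h) \<bullet> h - G u \<bullet> h - L * t * (norm h)\<^sup>2)) (at t)" for t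
    unfolding w1_def by (auto intro!: derivative_eq_intros deriv_line[OF d])
  have D2: "(w2 has_real_derivative (G (u + t *\<^sub>R h) \<bullet> h - G u \<bullet> h + L * t * (norm h)\<^sup>2)) (at t)" for t
    unfolding w2_def by (auto intro!: derivative_eq_intros deriv_line[OF d])
  have "w1 1 \<le> w1 0"
  proof (rule DERIV_nonpos_imp_nonincreasing[of 0 1])
    fix x :: real assume x: "0 \<le> x" "x \<le> 1"
    show "\<exists>y. (w1 has_real_derivative y) (at x) \<and> y \<le> 0"
      using D1[of x] lip[OF x(1)] by (intro exI[of _ "G (u + x *\<^sub>R h) \<bullet> h - G u \<bullet> h - L * x * (norm h)\<^sup>2"]) (auto simp: inner_diff_left abs_le_iff)
  qed simp
  moreover have "w2 0 \<le> w2 1"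
  proof (rule DERIV_nonneg_imp_nondecreasing[of 0 1])
    fix x :: real assume x: "0 \<le> x" "x \<le> 1"
    show "\<exists>y. (w2 has_real_derivative y) (at x) \<and> y \<ge> 0"
      using D2[of x] lip[OF x(1)] by (intro exI[of _ "G (u + x *\<^sub>R h) \<bullet> h - G u \<bullet> h + L * x * (norm h)\<^sup>2"]) (auto simp: inner_diff_left abs_le_iff)
  qed simp
  ultimately show ?thesis unfolding w1_def w2_def abs_le_iff by (simp add: algebra_simps)
qed



lemma deriv_from_quad:
  fixes \<Phi> :: "'a::real_inner \<Rightarrow> real"
  assumes q: "\<And>h. \<bar>\<Phi> (u + h) - \<Phi> u - g \<bullet> h\<bar> \<le> C * (norm h)\<^sup>2" and C: "C \<ge> 0"
  shows "GDERIV \<Phi> u :> g"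
  unfolding gderiv_def has_derivative_at_alt
proof (intro conjI allI impI)
  show "bounded_linear (\<lambda>h. h \<bullet> g)" by (rule bounded_linear_inner_left)
  fix e :: real assume e: "e > 0"
  show "\<exists>d>0. \<forall>y. norm (y - u) < d \<longrightarrow> norm (\<Phi> y - \<Phi> u - (y - u) \<bullet> g) \<le> e * norm (y - u)"
  proof (intro exI[of _ "e / (C + 1)"] conjI allI impI)
    show "0 < e / (C + 1)" using e C by simp
    fix y assume y: "norm (y - u) < e / (C + 1)"
    have "norm (\<Phi> y - \<Phi> u - (y - u) \<bullet> g) \<le> C * (norm (y - u))\<^sup>2"
      using q[of "y - u"] by (simp add: inner_commute)
    also have "\<dots> \<le> (C + 1) * (norm (y - u))\<^sup>2" using C by (simp add: mult_right_mono)
    also have "\<dots> = ((C + 1) * norm (y - u)) * norm (y - u)" by (simp add: power2_eq_square)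
    also have "\<dots> \<le> e * norm (y - u)"
      using y C by (intro mult_right_mono) (auto simp: field_simps)
    finally show "norm (\<Phi> y - \<Phi> u - (y - u) \<bullet> g) \<le> e * norm (y - u)" .
  qed
qed

lemma gderiv_unique:
  assumes "GDERIV \<Phi> u :> g1" "GDERIV \<Phi> u :> g2"
  shows "g1 = g2"
proof -
  have "(\<lambda>h. h \<bullet> g1) = (\<lambda>h. h \<bullet> g2)"
    using has_derivative_unique assms unfolding gderiv_def by blast
  then have "(g1 - g2) \<bullet> g1 = (g1 - g2) \<bullet> g2" by metis
  then have "(g1 - g2) \<bullet> (g1 - g2) = 0" by (simp add: inner_diff_right)
  then show ?thesis by simp
qed

lemma gderiv_some:
  assumes "GDERIV \<Phi> u :> g"
  shows "(SOME D. GDERIV \<Phi> u :> D) = g"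
  by (rule some_equality[where P="\<lambda>D. GDERIV \<Phi> u :> D", OF assms]) (rule gderiv_unique[OF _ assms])

lemma exp_grad:
  fixes g :: "'s \<Rightarrow> 'a::euclidean_space \<Rightarrow> real" and G :: "'s \<Rightarrow> 'a \<Rightarrow> 'a"
  assumes P: "prob_space D"
   and int: "\<And>u. integrable D (\<lambda>s. g s u)"
   and dg: "\<And>s u. s \<in> space D \<Longrightarrow> GDERIV (g s) u :> G s u"
   and lip: "\<And>s. s \<in> space D \<Longrightarrow> L-lipschitz_on UNIV (G s)"
   and L0: "0 \<le> L"
  shows "\<exists>Gf. (\<forall>u. GDERIV (\<lambda>u. \<integral>s. g s u \<partial>D) u :> Gf u) \<and> (\<forall>u h. integrable D (\<lambda>s. G s u \<bullet> h))
     \<and> (\<forall>u h. Gf u \<bullet> h = (\<integral>s. G s u \<bullet> h \<partial>D))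
     \<and> (\<forall>u h. \<bar>(\<integral>s. g s (u + h) \<partial>D) - (\<integral>s. g s u \<partial>D) - Gf u \<bullet> h\<bar> \<le> L/2 * (norm h)\<^sup>2)"
proof -
  interpret prob_space D by (rule P)
  have q: "\<bar>g s (u + h) - g s u - G s u \<bullet> h\<bar> \<le> L/2 * (norm h)\<^sup>2" if "s \<in> space D" for s u h
    using quad_bound[OF dg[OF that] lip[OF that]] .
  have meas: "(\<lambda>s. G s u \<bullet> h) \<in> borel_measurable D" for u h
  proof (rule borel_measurable_LIMSEQ_real)
    fix s assume s: "s \<in> space D"
    let ?t = "\<lambda>i::nat. 1 / real (Suc i)"
    have "(\<lambda>i. (g s (u + ?t i *\<^sub>R h) - g s u) * real (Suc i) - G s u \<bullet> h) \<longlonglongrightarrow> 0"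
    proof (rule Lim_null_comparison)
      show "\<forall>\<^sub>F i in sequentially. norm ((g s (u + ?t i *\<^sub>R h) - g s u) * real (Suc i) - G s u \<bullet> h)
              \<le> L/2 * (norm h)\<^sup>2 * (1 / real (Suc i))"
      proof (intro always_eventually allI)
        fix i
        have "(g s (u + ?t i *\<^sub>R h) - g s u) * real (Suc i) - G s u \<bullet> h
              = (g s (u + ?t i *\<^sub>R h) - g s u - G s u \<bullet> (?t i *\<^sub>R h)) * real (Suc i)"
          by (simp add: field_simps)
        moreover have "\<bar>g s (u + ?t i *\<^sub>R h) - g s u - G s u \<bullet> (?t i *\<^sub>R h)\<bar> \<le> L/2 * (norm (?t i *\<^sub>R h))\<^sup>2"
          using q[OF s] .
        ultimately show "norm ((g s (u + ?t i *\<^sub>R h) - g s u) * real (Suc i) - G s u \<bullet> h)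
              \<le> L/2 * (norm h)\<^sup>2 * (1 / real (Suc i))"
          by (simp add: abs_mult power2_eq_square field_simps del: of_nat_Suc)
      qed
      show "(\<lambda>i. L/2 * (norm h)\<^sup>2 * (1 / real (Suc i))) \<longlonglongrightarrow> 0"
        by (intro tendsto_mult_right_zero) (simp add: LIMSEQ_Suc[OF lim_const_over_n] del: of_nat_Suc)
    qed
    then show "(\<lambda>i. (g s (u + ?t i *\<^sub>R h) - g s u) * real (Suc i)) \<longlonglongrightarrow> G s u \<bullet> h"
      by (simp add: LIM_zero_iff)
  next
    fix i :: nat
    show "(\<lambda>s. (g s (u + (1 / real (Suc i)) *\<^sub>R h) - g s u) * real (Suc i)) \<in> borel_measurable D"
      using int by (intro borel_measurable_times borel_measurable_diff borel_measurable_const borel_measurable_integrable)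
  qed
  have intG: "integrable D (\<lambda>s. G s u \<bullet> h)" for u h
  proof (rule Bochner_Integration.integrable_bound)
    show "integrable D (\<lambda>s. \<bar>g s (u + h) - g s u\<bar> + L/2 * (norm h)\<^sup>2)"
      using int by auto
    show "(\<lambda>s. G s u \<bullet> h) \<in> borel_measurable D" by (rule meas)
    show "AE s in D. norm (G s u \<bullet> h) \<le> norm (\<bar>g s (u + h) - g s u\<bar> + L/2 * (norm h)\<^sup>2)"
    proof (intro AE_I2)
      fix s assume s: "s \<in> space D"
      have "\<bar>G s u \<bullet> h\<bar> \<le> \<bar>g s (u + h) - g s u\<bar> + L/2 * (norm h)\<^sup>2"
        using q[OF s, of u h] by linarith
      then show "norm (G s u \<bullet> h) \<le> norm (\<bar>g s (u + h) - g s u\<bar> + L/2 * (norm h)\<^sup>2)"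
        by simp
    qed
  qed
  define Gf where "Gf u = (\<Sum>b\<in>Basis. (\<integral>s. G s u \<bullet> b \<partial>D) *\<^sub>R b)" for u
  have rep: "Gf u \<bullet> h = (\<integral>s. G s u \<bullet> h \<partial>D)" for u h
  proof -
    have "(\<integral>s. G s u \<bullet> h \<partial>D) = (\<integral>s. (\<Sum>b\<in>Basis. (G s u \<bullet> b) * (h \<bullet> b)) \<partial>D)"
      by (subst euclidean_inner) simp
    also have "\<dots> = (\<Sum>b\<in>Basis. (\<integral>s. G s u \<bullet> b \<partial>D) * (h \<bullet> b))"
      using intG by (simp add: integral_sum)
    also have "\<dots> = Gf u \<bullet> h"
      unfolding Gf_def by (simp add: inner_sum_left) (metis inner_commute)
    finally show ?thesis by simp
  qed
  have quad: "\<bar>(\<integral>s. g s (u + h) \<partial>D) - (\<integral>s. g s u \<partial>D) - Gf u \<bullet> h\<bar> \<le> L/2 * (norm h)\<^sup>2" for u h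
  proof -
    have "(\<integral>s. g s (u + h) \<partial>D) - (\<integral>s. g s u \<partial>D) - Gf u \<bullet> h
          = (\<integral>s. g s (u + h) - g s u - G s u \<bullet> h \<partial>D)"
      using int intG by (simp add: rep)
    also have "\<bar>\<dots>\<bar> \<le> (\<integral>s. \<bar>g s (u + h) - g s u - G s u \<bullet> h\<bar> \<partial>D)"
      using integral_norm_bound[of D "\<lambda>s. g s (u + h) - g s u - G s u \<bullet> h"] by simp
    also have "\<dots> \<le> (\<integral>s. L/2 * (norm h)\<^sup>2 \<partial>D)"
      using int intG q by (intro integral_mono) auto
    also have "\<dots> = L/2 * (norm h)\<^sup>2" by (simp add: prob_space)
    finally show ?thesis .
  qed
  show ?thesis
  proof (intro exI[of _ Gf] conjI allI)
    fix u show "GDERIV (\<lambda>u. \<integral>s. g s u \<partial>D) u :> Gf u"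
      using L0 by (intro deriv_from_quad[where C="L/2"] quad) auto
  qed (use quad rep intG in auto)
qed



lemma step_arith:
  fixes r r' n P a :: real
  assumes "0 \<le> r" "0 \<le> r'" "0 \<le> n" "0 \<le> P" "a > 0" "r'\<^sup>2 \<le> r\<^sup>2 - a*n\<^sup>2" "P*r \<le> n"
  shows "a*n*P \<le> 2*(r - r')"
proof (cases "r = 0")
  case True
  have "0 \<le> a*n\<^sup>2" using assms by simp
  have "0 \<le> r'\<^sup>2" by simp
  moreover have "r'\<^sup>2 \<le> - (a*n\<^sup>2)" using assms(6) True by simp
  ultimately have "a*n\<^sup>2 \<le> 0" by linarith
  then have "n\<^sup>2 \<le> 0" using assms by (simp add: mult_le_0_iff)
  then have n0: "n = 0" by simp
  then have "r'\<^sup>2 \<le> 0" using assms(6) True by simp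
  then have "r' = 0" by simp
  then show ?thesis using n0 True by simp
next
  case False
  then have r: "r > 0" using assms(1) by simp
  have "0 \<le> a*n\<^sup>2" using assms by simp
  then have "r'\<^sup>2 \<le> r\<^sup>2" using assms(6) by linarith
  then have rr: "r' \<le> r" using assms(1) by (rule power2_le_imp_le)
  have "r * (a*n*P) = a*n*(P*r)" by (simp add: algebra_simps)
  also have "\<dots> \<le> a*n*n" using assms(3,5,7) by (intro mult_left_mono) auto
  also have "\<dots> \<le> r\<^sup>2 - r'\<^sup>2" using assms(6) by (simp add: power2_eq_square)
  also have "\<dots> \<le> r * (2*(r - r'))"
  proof -
    have "r * (2*(r - r')) - (r\<^sup>2 - r'\<^sup>2) = (r - r')\<^sup>2" by (simp add: power2_eq_square algebra_simps)
    moreover have "0 \<le> (r - r')\<^sup>2" by simp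
    ultimately show ?thesis by linarith
  qed
  finally show ?thesis using r by (rule mult_le_cancel_left_pos[THEN iffD1, rotated])
qed

lemma ascent:
  fixes \<phi> :: "'b::real_inner \<Rightarrow> real" and G :: "'b \<Rightarrow> 'b"
  assumes bnd: "\<And>u. \<phi> u \<le> M"
    and low: "\<And>u h. \<phi> u + G u \<bullet> h - L/2 * (norm h)\<^sup>2 \<le> \<phi> (u + h)"
    and pl: "\<And>u. 2*\<mu>*(M - \<phi> u) \<le> (norm (G u))\<^sup>2"
    and mu: "\<mu> > 0" and s: "0 < s" and sL: "s * L < 2"
    and eps: "\<epsilon> > 0"
  shows "\<exists>u. M - \<phi> u \<le> \<epsilon> \<and> (norm (u - y))\<^sup>2 * (\<mu> * (1 - s*L/2)\<^sup>2) \<le> 2 * (M - \<phi> y)"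
proof -
  define u where "u = rec_nat y (\<lambda>_ z. z + s *\<^sub>R G z)"
  have u0: "u 0 = y" and uS: "\<And>k. u (Suc k) = u k + s *\<^sub>R G (u k)" by (simp_all add: u_def)
  define gp where "gp k = M - \<phi> (u k)" for k
  define q where "q = 1 - s*L/2"
  define a where "a = s * q"
  define P where "P = sqrt (2*\<mu>)"
  have q: "q > 0" using sL by (simp add: q_def)
  have a: "a > 0" using q s by (simp add: a_def)
  have P: "P \<ge> 0" using mu by (simp add: P_def)
  have nn: "gp k \<ge> 0" for k using bnd by (simp add: gp_def)
  have dec: "gp (Suc k) \<le> gp k - a * (norm (G (u k)))\<^sup>2" for k
  proof -
    have "\<phi> (u k) + G (u k) \<bullet> (s *\<^sub>R G (u k)) - L/2 * (norm (s *\<^sub>R G (u k)))\<^sup>2 \<le> \<phi> (u (Suc k))"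
      using low[of "u k" "s *\<^sub>R G (u k)"] by (simp add: uS)
    moreover have "G (u k) \<bullet> (s *\<^sub>R G (u k)) - L/2 * (norm (s *\<^sub>R G (u k)))\<^sup>2 = a * (norm (G (u k)))\<^sup>2"
    proof -
      have e1: "G (u k) \<bullet> (s *\<^sub>R G (u k)) = s * (norm (G (u k)))\<^sup>2" by (simp add: power2_norm_eq_inner)
      have e2: "(norm (s *\<^sub>R G (u k)))\<^sup>2 = s\<^sup>2 * (norm (G (u k)))\<^sup>2" by (simp add: power_mult_distrib)
      show ?thesis unfolding e1 e2 a_def q_def by (simp add: algebra_simps power2_eq_square)
    qed
    ultimately show ?thesis by (simp add: gp_def)
  qed
  have Pn: "P * sqrt (gp k) \<le> norm (G (u k))" for k
  proof -
    have "P * sqrt (gp k) = sqrt (2*\<mu>*gp k)" by (simp add: P_def real_sqrt_mult)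
    also have "\<dots> \<le> sqrt ((norm (G (u k)))\<^sup>2)" by (rule real_sqrt_le_mono) (use pl[of "u k"] in \<open>simp add: gp_def\<close>)
    finally show ?thesis by simp
  qed
  have stepk: "s * norm (G (u k)) * (q * P) \<le> 2 * (sqrt (gp k) - sqrt (gp (Suc k)))" for k
  proof -
    have "a * norm (G (u k)) * P \<le> 2 * (sqrt (gp k) - sqrt (gp (Suc k)))"
    proof (rule step_arith)
      show "(sqrt (gp (Suc k)))\<^sup>2 \<le> (sqrt (gp k))\<^sup>2 - a * (norm (G (u k)))\<^sup>2"
        using dec[of k] nn[of k] nn[of "Suc k"] by simp
    qed (use a P Pn nn in auto)
    then show ?thesis by (simp add: a_def algebra_simps)
  qed
  have path: "norm (u k - y) * (q * P) \<le> 2 * (sqrt (gp 0) - sqrt (gp k))" for k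
  proof (induction k)
    case 0 then show ?case by (simp add: u0)
  next
    case (Suc k)
    have "norm (u (Suc k) - y) \<le> norm (u k - y) + s * norm (G (u k))"
      using norm_triangle_ineq[of "u k - y" "s *\<^sub>R G (u k)"] s by (simp add: uS algebra_simps)
    then have "norm (u (Suc k) - y) * (q * P) \<le> (norm (u k - y) + s * norm (G (u k))) * (q * P)"
      using q P by (intro mult_right_mono) auto
    also have "\<dots> = norm (u k - y) * (q * P) + s * norm (G (u k)) * (q * P)" by (simp add: algebra_simps)
    also have "\<dots> \<le> 2 * (sqrt (gp 0) - sqrt (gp (Suc k)))" using Suc.IH stepk[of k] by simp
    finally show ?case .
  qed
  have distk: "(norm (u k - y))\<^sup>2 * (\<mu> * q\<^sup>2) \<le> 2 * (M - \<phi> y)" for k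
  proof -
    have "norm (u k - y) * (q * P) \<le> 2 * sqrt (gp 0)" using path[of k] real_sqrt_ge_zero[OF nn[of k]] by (simp only: right_diff_distrib)
    moreover have "0 \<le> norm (u k - y) * (q * P)" using q P by simp
    ultimately have "(norm (u k - y) * (q * P))\<^sup>2 \<le> (2 * sqrt (gp 0))\<^sup>2" by (rule power_mono)
    then have "(norm (u k - y))\<^sup>2 * q\<^sup>2 * (2*\<mu>) \<le> 4 * gp 0"
      using nn[of 0] mu by (simp add: P_def power_mult_distrib)
    then show ?thesis by (simp add: gp_def u0 algebra_simps)
  qed
  define Q where "Q = max (1/2) (1 - 2*a*\<mu>)"
  have Q: "0 < Q" "Q < 1" using a mu by (auto simp: Q_def)
  have geo1: "gp (Suc k) \<le> Q * gp k" for k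
  proof -
    have "gp (Suc k) \<le> gp k - a * (2*\<mu>*gp k)"
      using dec[of k] pl[of "u k"] a by (smt (verit, best) gp_def mult_left_mono)
    also have "\<dots> = (1 - 2*a*\<mu>) * gp k" by (simp add: algebra_simps)
    also have "\<dots> \<le> Q * gp k" using nn[of k] by (intro mult_right_mono) (auto simp: Q_def)
    finally show ?thesis .
  qed
  have geo: "gp k \<le> Q^k * gp 0" for k
  proof (induction k)
    case (Suc k)
    have "gp (Suc k) \<le> Q * gp k" by (rule geo1)
    also have "\<dots> \<le> Q * (Q^k * gp 0)" using Suc.IH Q by (intro mult_left_mono) auto
    finally show ?case by simp
  qed simp
  obtain k where k: "gp k \<le> \<epsilon>"
  proof (cases "gp 0 = 0")
    case True then show ?thesis using that[of 0] eps by simp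
  next
    case False
    then have g0: "gp 0 > 0" using nn[of 0] by simp
    obtain k where "Q^k < \<epsilon> / gp 0" using real_arch_pow_inv[of "\<epsilon> / gp 0" Q] Q eps g0 by auto
    then have "Q^k * gp 0 < \<epsilon>" using g0 by (simp add: field_simps)
    then show ?thesis using that[of k] geo[of k] by simp
  qed
  show ?thesis
    using k distk[of k] by (intro exI[of _ "u k"]) (simp add: gp_def q_def)
qed



lemma arith_q:
  fixes m :: real assumes "0 < m" "m \<le> 1/4"
  shows "1 \<le> (1-m)\<^sup>2 * (1 + 4*m)"
proof -
  have "0 \<le> m*(2 - 7*m + 4*m\<^sup>2)" using assms by (intro mult_nonneg_nonneg) (auto simp: power2_eq_square)
  moreover have "(1-m)\<^sup>2 * (1 + 4*m) = 1 + m*(2 - 7*m + 4*m\<^sup>2)" by (simp add: power2_eq_square algebra_simps)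
  ultimately show ?thesis by linarith
qed

lemma young:
  fixes z w c :: real assumes "c > 0"
  shows "z * w \<le> c * z\<^sup>2 + w\<^sup>2 / (4*c)"
proof -
  have "0 \<le> (2*c*z - w)\<^sup>2" by simp
  then have "4*c*(z*w) \<le> 4*c*(c * z\<^sup>2) + w\<^sup>2" by (simp add: power2_eq_square algebra_simps)
  then have "4*c*(z*w) \<le> 4*c*(c * z\<^sup>2 + w\<^sup>2 / (4*c))" using assms by (simp add: algebra_simps)
  then show ?thesis using assms by (simp add: mult_le_cancel_left_pos)
qed

lemma final_arith:
  fixes \<mu> Lf \<rho> B \<delta> \<delta>' A q :: real
  assumes mu: "\<mu> > 0" and Lf: "Lf > 0" and muL: "\<mu> \<le> Lf" and rho: "\<rho> > 0" "\<rho> * Lf \<le> 1/2"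
    and B: "2 * (Lf * (1 + Lf / \<mu> / 2)) / (\<mu> * \<rho>) \<le> B"
    and q: "q = 1 - \<mu>/(4*Lf)"
    and nn: "\<delta> \<ge> 0" "\<delta>' \<ge> 0" "A \<ge> 0"
    and h: "(1 - \<rho>*\<mu>/2) * \<delta>' \<le> \<delta> + (Lf\<^sup>2/(\<rho>*\<mu>\<^sup>2*q\<^sup>2) + Lf) * A"
  shows "(1 - \<rho>*\<mu>) * \<delta>' + \<rho>*Lf\<^sup>2*A \<le> (1 - \<rho>*\<mu>/2) * \<delta> + B * A"
proof -
  define K where "K = Lf\<^sup>2/(\<rho>*\<mu>\<^sup>2*q\<^sup>2) + Lf"
  have rm: "\<rho>*\<mu> \<le> 1/2"
  proof -
    have "\<rho>*\<mu> \<le> \<rho>*Lf" using rho muL by (intro mult_left_mono) auto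
    then show ?thesis using rho by linarith
  qed
  have rm0: "\<rho>*\<mu> > 0" using rho mu by simp
  have h1: "1 - \<rho>*\<mu> \<le> (1 - \<rho>*\<mu>/2)\<^sup>2"
  proof -
    have "(1 - \<rho>*\<mu>/2)\<^sup>2 = 1 - \<rho>*\<mu> + (\<rho>*\<mu>/2)\<^sup>2" by (simp add: power2_eq_square algebra_simps)
    moreover have "0 \<le> (\<rho>*\<mu>/2)\<^sup>2" by simp
    ultimately show ?thesis by linarith
  qed
  have c0: "0 \<le> 1 - \<rho>*\<mu>/2" "1 - \<rho>*\<mu>/2 \<le> 1" using rm rm0 by auto
  have K0: "K \<ge> 0" using Lf rho by (simp add: K_def)
  have "(1 - \<rho>*\<mu>) * \<delta>' \<le> (1 - \<rho>*\<mu>/2)\<^sup>2 * \<delta>'" using h1 nn by (intro mult_right_mono) auto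
  also have "\<dots> = (1 - \<rho>*\<mu>/2) * ((1 - \<rho>*\<mu>/2) * \<delta>')" by (simp add: power2_eq_square)
  also have "\<dots> \<le> (1 - \<rho>*\<mu>/2) * (\<delta> + K * A)" using h c0 by (intro mult_left_mono) (auto simp: K_def)
  also have "\<dots> = (1 - \<rho>*\<mu>/2) * \<delta> + (1 - \<rho>*\<mu>/2) * (K * A)" by (simp add: algebra_simps)
  also have "\<dots> \<le> (1 - \<rho>*\<mu>/2) * \<delta> + K * A"
    using c0 K0 nn by (smt (verit) mult_left_le_one_le mult_nonneg_nonneg)
  finally have s1: "(1 - \<rho>*\<mu>) * \<delta>' \<le> (1 - \<rho>*\<mu>/2) * \<delta> + K * A" .
  have m: "0 < \<mu>/(4*Lf)" "\<mu>/(4*Lf) \<le> 1/4" using mu Lf muL by (auto simp: field_simps)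
  have qq: "1 \<le> q\<^sup>2 * (1 + \<mu>/Lf)"
    using arith_q[OF m] Lf unfolding q by (simp add: field_simps)
  have q0: "q > 0" using m q by simp
  have "Lf\<^sup>2/(\<rho>*\<mu>\<^sup>2*q\<^sup>2) = (Lf\<^sup>2/(\<rho>*\<mu>\<^sup>2)) * (1/q\<^sup>2)" by simp
  also have "\<dots> \<le> (Lf\<^sup>2/(\<rho>*\<mu>\<^sup>2)) * (1 + \<mu>/Lf)"
  proof (intro mult_left_mono)
    show "1/q\<^sup>2 \<le> 1 + \<mu>/Lf" using qq q0 by (simp add: field_simps)
  qed (use rho mu in auto)
  also have "\<dots> = Lf\<^sup>2/(\<rho>*\<mu>\<^sup>2) + Lf/(\<rho>*\<mu>)" using Lf mu rho by (simp add: field_simps power2_eq_square)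
  finally have K1: "K \<le> Lf\<^sup>2/(\<rho>*\<mu>\<^sup>2) + Lf/(\<rho>*\<mu>) + Lf" by (simp add: K_def)
  have Beq: "2 * (Lf * (1 + Lf / \<mu> / 2)) / (\<mu> * \<rho>) = 2*Lf/(\<rho>*\<mu>) + Lf\<^sup>2/(\<rho>*\<mu>\<^sup>2)"
    using mu rho by (simp add: field_simps power2_eq_square)
  have t1: "\<rho>*Lf\<^sup>2 \<le> Lf/2" using rho Lf by (simp add: power2_eq_square)
  have t2: "2*Lf \<le> Lf/(\<rho>*\<mu>)" using rm rm0 Lf by (simp add: field_simps)
  have KB: "K + \<rho>*Lf\<^sup>2 \<le> B" using K1 Beq B t1 t2 Lf times_divide_eq_left[of 2 Lf "\<rho>*\<mu>"] by linarith
  have "(1 - \<rho>*\<mu>) * \<delta>' + \<rho>*Lf\<^sup>2*A \<le> (1 - \<rho>*\<mu>/2) * \<delta> + (K + \<rho>*Lf\<^sup>2) * A"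
    using s1 by (simp add: algebra_simps)
  also have "\<dots> \<le> (1 - \<rho>*\<mu>/2) * \<delta> + B * A" using KB nn by (simp add: mult_right_mono)
  finally show ?thesis .
qed



lemma main_abs:
  fixes f :: "'a::real_inner \<Rightarrow> 'b::real_inner \<Rightarrow> real" and gx :: "'a \<Rightarrow> 'b \<Rightarrow> 'a"
    and gy :: "'a \<Rightarrow> 'b \<Rightarrow> 'b" and F :: "'a \<Rightarrow> real"
  assumes Fge: "\<And>a b. f a b \<le> F a"
    and qy: "\<And>a b h. \<bar>f a (b + h) - f a b - gy a b \<bullet> h\<bar> \<le> Lf/2 * (norm h)\<^sup>2"
    and qx: "\<And>a b h. \<bar>f (a + h) b - f a b - gx a b \<bullet> h\<bar> \<le> Lf/2 * (norm h)\<^sup>2"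
    and ly: "\<And>a a' b. norm (gy a b - gy a' b) \<le> Lf * norm (a - a')"
    and lx: "\<And>a b b'. norm (gx a b - gx a b') \<le> Lf * norm (b - b')"
    and PL: "\<And>a b. 2*\<mu>*(F a - f a b) \<le> (norm (gy a b))\<^sup>2"
    and mu: "\<mu> > 0" and Lf: "Lf > 0" and rho: "\<rho> > 0" "\<rho> * Lf \<le> 1/2"
    and B: "2 * (Lf * (1 + Lf / \<mu> / 2)) / (\<mu> * \<rho>) \<le> B"
  shows "F (x + d) - f (x + d) (y + \<rho> *\<^sub>R v) \<le> (1 - \<rho>*\<mu>/2) * (F x - f x y) + B * (norm d)\<^sup>2
            - \<rho>/4 * (norm v)\<^sup>2 + \<rho> * (norm (gy x y - v))\<^sup>2"
proof -
  have lowy: "f a b + gy a b \<bullet> h - Lf/2 * (norm h)\<^sup>2 \<le> f a (b + h)" for a b h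
    using qy[of a b h] unfolding abs_le_iff by linarith
  have B0: "B \<ge> 0"
  proof -
    have "0 \<le> 2 * (Lf * (1 + Lf / \<mu> / 2)) / (\<mu> * \<rho>)" using mu Lf rho by simp
    then show ?thesis using B by linarith
  qed
  show ?thesis
  proof (cases "Lf < \<mu>")
    case True
    have gz: "gy a b = 0 \<and> F a = f a b" for a b
    proof -
      define g where "g = gy a b"
      define \<delta> where "\<delta> = F a - f a b"
      have d0: "\<delta> \<ge> 0" using Fge[of a b] by (simp add: \<delta>_def)
      have "f a b + g \<bullet> ((1/Lf) *\<^sub>R g) - Lf/2 * (norm ((1/Lf) *\<^sub>R g))\<^sup>2 \<le> f a (b + (1/Lf) *\<^sub>R g)"
        using lowy unfolding g_def .
      also have "\<dots> \<le> F a" by (rule Fge)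
      finally have "g \<bullet> ((1/Lf) *\<^sub>R g) - Lf/2 * (norm ((1/Lf) *\<^sub>R g))\<^sup>2 \<le> \<delta>" by (simp add: \<delta>_def)
      moreover have "g \<bullet> ((1/Lf) *\<^sub>R g) - Lf/2 * (norm ((1/Lf) *\<^sub>R g))\<^sup>2 = (norm g)\<^sup>2 / (2*Lf)"
      proof -
        have e1: "g \<bullet> ((1/Lf) *\<^sub>R g) = (1/Lf) * (norm g)\<^sup>2" by (simp add: power2_norm_eq_inner)
        have e2: "(norm ((1/Lf) *\<^sub>R g))\<^sup>2 = (1/Lf)\<^sup>2 * (norm g)\<^sup>2" by (simp only: norm_scaleR power_mult_distrib power2_abs)
        show ?thesis unfolding e1 e2 using Lf by (simp add: field_simps power2_eq_square)
      qed
      ultimately have "(norm g)\<^sup>2 / (2*Lf) \<le> \<delta>" by linarith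
      then have n1: "(norm g)\<^sup>2 \<le> 2*Lf*\<delta>" using Lf by (simp add: pos_divide_le_eq mult.commute)
      have n2: "2*\<mu>*\<delta> \<le> (norm g)\<^sup>2" using PL[of a b] by (simp add: g_def \<delta>_def)
      have "2*\<mu>*\<delta> \<le> 2*Lf*\<delta>" using n1 n2 by linarith
      then have "\<delta> = 0" using True d0 by (smt (verit) mult_le_cancel_right mult_le_cancel_left_pos)
      then show ?thesis using n1 by (simp add: g_def \<delta>_def)
    qed
    have "F (x + d) - f (x + d) (y + \<rho> *\<^sub>R v) = 0" using gz by simp
    moreover have "F x - f x y = 0" using gz by simp
    moreover have "gy x y = 0" using gz by simp
    moreover have "0 \<le> B * (norm d)\<^sup>2" using B0 by simp
    moreover have "\<rho>/4 * (norm v)\<^sup>2 \<le> \<rho> * (norm v)\<^sup>2" using rho by simp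
    ultimately show ?thesis by simp
  next
    case False
    then have muL: "\<mu> \<le> Lf" by simp
    define x' where "x' = x + d"
    define \<delta> where "\<delta> = F x - f x y"
    define \<delta>' where "\<delta>' = F x' - f x' y"
    define A where "A = (norm d)\<^sup>2"
    define g where "g = gy x' y"
    define g0 where "g0 = gy x y"
    define V where "V = (norm (g0 - v))\<^sup>2"
    have d0: "\<delta> \<ge> 0" "\<delta>' \<ge> 0" "A \<ge> 0" using Fge by (auto simp: \<delta>_def \<delta>'_def A_def)
    have S1: "f x' y + \<rho> * (g \<bullet> v) - Lf/2 * \<rho>\<^sup>2 * (norm v)\<^sup>2 \<le> f x' (y + \<rho> *\<^sub>R v)"
      using lowy[of x' y "\<rho> *\<^sub>R v"] rho by (simp add: g_def power_mult_distrib)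
    have S2: "2 * (g \<bullet> v) = (norm g)\<^sup>2 + (norm v)\<^sup>2 - (norm (g - v))\<^sup>2"
      by (simp add: power2_norm_eq_inner inner_diff_left inner_diff_right inner_commute)
    have S3: "(norm (g - v))\<^sup>2 \<le> 2 * Lf\<^sup>2 * A + 2 * V"
    proof -
      have "norm (g - v) \<le> norm (g - g0) + norm (g0 - v)" using norm_triangle_ineq[of "g - g0" "g0 - v"] by simp
      also have "\<dots> \<le> Lf * norm d + norm (g0 - v)" using ly[of x' y x] by (simp add: g_def g0_def x'_def)
      finally have "(norm (g - v))\<^sup>2 \<le> (Lf * norm d + norm (g0 - v))\<^sup>2" by (rule power_mono) simp
      also have "\<dots> \<le> 2 * (Lf * norm d)\<^sup>2 + 2 * (norm (g0 - v))\<^sup>2"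
      proof -
        have "0 \<le> (Lf * norm d - norm (g0 - v))\<^sup>2" by simp
        then show ?thesis by (simp add: power2_eq_square algebra_simps)
      qed
      finally show ?thesis by (simp add: A_def V_def power_mult_distrib)
    qed
    have S4: "2*\<mu>*\<delta>' \<le> (norm g)\<^sup>2" using PL[of x' y] by (simp add: g_def \<delta>'_def)
    have S5: "F x' - f x' (y + \<rho> *\<^sub>R v) \<le> (1 - \<rho>*\<mu>) * \<delta>' - \<rho>/4 * (norm v)\<^sup>2 + \<rho>*Lf\<^sup>2*A + \<rho>*V"
    proof -
      have "F x' - f x' (y + \<rho> *\<^sub>R v) \<le> \<delta>' - \<rho> * (g \<bullet> v) + Lf/2 * \<rho>\<^sup>2 * (norm v)\<^sup>2"
        using S1 by (simp add: \<delta>'_def)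
      also have "\<dots> = \<delta>' - \<rho>/2 * ((norm g)\<^sup>2 + (norm v)\<^sup>2 - (norm (g - v))\<^sup>2) + Lf/2 * \<rho>\<^sup>2 * (norm v)\<^sup>2"
        unfolding S2[symmetric] by simp
      also have "\<dots> \<le> \<delta>' - \<rho>/2 * (2*\<mu>*\<delta>' + (norm v)\<^sup>2 - (2 * Lf\<^sup>2 * A + 2 * V)) + Lf/2 * \<rho>\<^sup>2 * (norm v)\<^sup>2"
        using S3 S4 rho by (simp add: mult_left_mono)
      also have "\<dots> = (1 - \<rho>*\<mu>) * \<delta>' - \<rho>/2 * (norm v)\<^sup>2 + \<rho>*Lf\<^sup>2*A + \<rho>*V + (\<rho>*Lf) * (\<rho>/2 * (norm v)\<^sup>2)"
        by (simp add: algebra_simps power2_eq_square)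
      also have "\<dots> \<le> (1 - \<rho>*\<mu>) * \<delta>' - \<rho>/2 * (norm v)\<^sup>2 + \<rho>*Lf\<^sup>2*A + \<rho>*V + (1/2) * (\<rho>/2 * (norm v)\<^sup>2)"
      proof -
        have "(\<rho>*Lf) * (\<rho>/2 * (norm v)\<^sup>2) \<le> (1/2) * (\<rho>/2 * (norm v)\<^sup>2)"
          using rho by (intro mult_right_mono) auto
        then show ?thesis by linarith
      qed
      also have "\<dots> = (1 - \<rho>*\<mu>) * \<delta>' - \<rho>/4 * (norm v)\<^sup>2 + \<rho>*Lf\<^sup>2*A + \<rho>*V" by simp
      finally show ?thesis .
    qed
    define q where "q = 1 - \<mu>/(4*Lf)"
    define s where "s = \<mu>/(2*Lf\<^sup>2)"
    have sq: "1 - s*Lf/2 = q" using Lf by (simp add: s_def q_def power2_eq_square field_simps)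
    have s0: "s > 0" using mu Lf by (simp add: s_def)
    have sL: "s * Lf < 2"
    proof -
      have "s * Lf = \<mu>/(2*Lf)" using Lf by (simp add: s_def power2_eq_square)
      also have "\<dots> \<le> 1/2" using muL Lf by (simp add: field_simps)
      finally show ?thesis by simp
    qed
    have q0: "q > 0" using sq sL by simp
    have S6: "\<delta>' \<le> \<epsilon> + \<delta> + Lf * norm (u - y) * norm d + Lf * A"
      if "F x' - f x' u \<le> \<epsilon>" for u \<epsilon>
    proof -
      have xx: "x' + - d = x" by (simp add: x'_def)
      have a1: "f x u - f x' u - gx x' u \<bullet> (- d) \<ge> - (Lf/2 * A)"
        using qx[where a=x' and b=u and h="-d"] unfolding xx A_def abs_le_iff norm_minus_cancel by linarith
      have a2: "f x y - f x' y - gx x' y \<bullet> (- d) \<le> Lf/2 * A"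
        using qx[where a=x' and b=y and h="-d"] unfolding xx A_def abs_le_iff norm_minus_cancel by linarith
      have a3: "f x u \<le> F x" by (rule Fge)
      have a4: "(gx x' u - gx x' y) \<bullet> d \<le> Lf * norm (u - y) * norm d"
      proof -
        have "(gx x' u - gx x' y) \<bullet> d \<le> norm (gx x' u - gx x' y) * norm d" by (rule norm_cauchy_schwarz)
        also have "\<dots> \<le> Lf * norm (u - y) * norm d" using lx[of x' u y] by (simp add: mult_right_mono)
        finally show ?thesis .
      qed
      show ?thesis using that a1 a2 a3 a4
        by (simp add: \<delta>_def \<delta>'_def inner_diff_left)
    qed
    have S7: "(1 - \<rho>*\<mu>/2) * \<delta>' \<le> \<delta> + (Lf\<^sup>2/(\<rho>*\<mu>\<^sup>2*q\<^sup>2) + Lf) * A"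
    proof (rule field_le_epsilon)
      fix \<epsilon> :: real assume eps: "\<epsilon> > 0"
      obtain u where u1: "F x' - f x' u \<le> \<epsilon>" and u2: "(norm (u - y))\<^sup>2 * (\<mu> * q\<^sup>2) \<le> 2 * (F x' - f x' y)"
        using ascent[of "f x'" "F x'" "gy x'" Lf \<mu> s \<epsilon> y] Fge lowy PL mu s0 sL eps sq by auto
      define c where "c = \<rho>*\<mu>\<^sup>2*q\<^sup>2/4"
      have c0: "c > 0" using rho mu q0 by (simp add: c_def)
      have "Lf * norm (u - y) * norm d = norm (u - y) * (Lf * norm d)" by simp
      also have "\<dots> \<le> c * (norm (u - y))\<^sup>2 + (Lf * norm d)\<^sup>2 / (4*c)" by (rule young[OF c0])
      also have "c * (norm (u - y))\<^sup>2 = (\<rho>*\<mu>/4) * ((norm (u - y))\<^sup>2 * (\<mu> * q\<^sup>2))"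
        by (simp add: c_def power2_eq_square)
      also have "\<dots> \<le> (\<rho>*\<mu>/4) * (2 * \<delta>')" using u2 rho mu by (intro mult_left_mono) (auto simp: \<delta>'_def)
      also have "(Lf * norm d)\<^sup>2 / (4*c) = Lf\<^sup>2/(\<rho>*\<mu>\<^sup>2*q\<^sup>2) * A"
        by (simp add: c_def A_def power_mult_distrib)
      finally have "Lf * norm (u - y) * norm d \<le> \<rho>*\<mu>/2 * \<delta>' + Lf\<^sup>2/(\<rho>*\<mu>\<^sup>2*q\<^sup>2) * A" by (simp add: algebra_simps)
      then show "(1 - \<rho>*\<mu>/2) * \<delta>' \<le> \<delta> + (Lf\<^sup>2/(\<rho>*\<mu>\<^sup>2*q\<^sup>2) + Lf) * A + \<epsilon>"
        using S6[OF u1] by (simp add: algebra_simps)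
    qed
    have S8: "(1 - \<rho>*\<mu>) * \<delta>' + \<rho>*Lf\<^sup>2*A \<le> (1 - \<rho>*\<mu>/2) * \<delta> + B * A"
      by (rule final_arith[OF mu Lf muL rho B q_def d0(1) d0(2) d0(3) S7])
    show ?thesis using S5 S8 by (simp add: x'_def \<delta>_def A_def V_def g0_def)
  qed
qed



lemma lip_transfer:
  fixes g1 g2 :: "'a::real_inner"
  assumes P: "prob_space D"
    and i1: "\<forall>h. integrable D (\<lambda>s. G1 s \<bullet> h)" and i2: "\<forall>h. integrable D (\<lambda>s. G2 s \<bullet> h)"
    and r1: "\<forall>h. g1 \<bullet> h = (\<integral>s. G1 s \<bullet> h \<partial>D)" and r2: "\<forall>h. g2 \<bullet> h = (\<integral>s. G2 s \<bullet> h \<partial>D)"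
    and b: "\<And>s. s \<in> space D \<Longrightarrow> norm (G1 s - G2 s) \<le> C" and C: "C \<ge> 0"
  shows "norm (g1 - g2) \<le> C"
proof -
  interpret prob_space D by (rule P)
  define \<Delta> where "\<Delta> = g1 - g2"
  have "(norm \<Delta>)\<^sup>2 = g1 \<bullet> \<Delta> - g2 \<bullet> \<Delta>" by (simp add: \<Delta>_def power2_norm_eq_inner inner_diff_left)
  also have "\<dots> = (\<integral>s. G1 s \<bullet> \<Delta> - G2 s \<bullet> \<Delta> \<partial>D)" using r1 r2 i1 i2 by simp
  also have "\<dots> \<le> (\<integral>s. C * norm \<Delta> \<partial>D)"
  proof (rule integral_mono)
    fix s assume s: "s \<in> space D"
    have "G1 s \<bullet> \<Delta> - G2 s \<bullet> \<Delta> = (G1 s - G2 s) \<bullet> \<Delta>" by (simp add: inner_diff_left)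
    also have "\<dots> \<le> norm (G1 s - G2 s) * norm \<Delta>" by (rule norm_cauchy_schwarz)
    also have "\<dots> \<le> C * norm \<Delta>" using b[OF s] by (simp add: mult_right_mono)
    finally show "G1 s \<bullet> \<Delta> - G2 s \<bullet> \<Delta> \<le> C * norm \<Delta>" .
  qed (use i1 i2 in auto)
  also have "\<dots> = C * norm \<Delta>" by (simp add: prob_space)
  finally have "norm \<Delta> * norm \<Delta> \<le> C * norm \<Delta>" by (simp add: power2_eq_square)
  then show ?thesis using C unfolding \<Delta>_def[symmetric]
    by (cases "norm \<Delta> = 0") (auto simp: mult_le_cancel_right)
qed

theorem lemma1:
  fixes D :: "'xi measure"
    and fs :: "'xi \<Rightarrow> real^'d \<Rightarrow> real^'p \<Rightarrow> real"
    and \<mu> Lf \<gamma> lam :: real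
    and \<eta> \<alpha> \<beta> :: "nat \<Rightarrow> real"
    and \<xi> :: "nat \<Rightarrow> 'xi"
    and x xt :: "nat \<Rightarrow> real^'d"
    and y yt :: "nat \<Rightarrow> real^'p"
    and v :: "nat \<Rightarrow> real^'p"
    and w :: "nat \<Rightarrow> real^'d"
  defines "f \<equiv> expf D fs"
    and "F \<equiv> maxf (expf D fs)"
    and "\<kappa> \<equiv> Lf / \<mu>"
    and "L \<equiv> Lf * (1 + Lf / \<mu> / 2)"
  assumes D: "prob_space D"
    (* the stochastic objective is well defined and has partial gradients *)
    and integ: "\<And>a b. integrable D (\<lambda>s. fs s a b)"
    and diffx: "\<And>s a b. s \<in> space D \<Longrightarrow> \<exists>G. GDERIV (\<lambda>u. fs s u b) a :> G"
    and diffy: "\<And>s a b. s \<in> space D \<Longrightarrow> \<exists>G. GDERIV (\<lambda>u. fs s a u) b :> G"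
    (* (A1) *)
    and mu_pos: "\<mu> > 0"
    and argmax: "\<And>a. \<exists>b. \<forall>b'. f a b' \<le> f a b"
    and PL: "\<And>a b. (norm (grady f a b))\<^sup>2 \<ge> 2 * \<mu> * (F a - f a b)"
    (* (A2) *)
    and Lxx: "\<And>s b. s \<in> space D \<Longrightarrow> Lf-lipschitz_on UNIV (\<lambda>a. gradx (fs s) a b)"
    and Lxy: "\<And>s a. s \<in> space D \<Longrightarrow> Lf-lipschitz_on UNIV (\<lambda>b. gradx (fs s) a b)"
    and Lyx: "\<And>s b. s \<in> space D \<Longrightarrow> Lf-lipschitz_on UNIV (\<lambda>a. grady (fs s) a b)"
    and Lyy: "\<And>s a. s \<in> space D \<Longrightarrow> Lf-lipschitz_on UNIV (\<lambda>b. grady (fs s) a b)"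
    (* samples and parameters *)
    and samples: "\<And>t. t \<ge> 1 \<Longrightarrow> \<xi> t \<in> space D"
    and eta_pos: "\<And>t. t \<ge> 1 \<Longrightarrow> \<eta> t > 0"
    and alpha: "\<And>t. t \<ge> 1 \<Longrightarrow> 0 < \<alpha> t \<and> \<alpha> t \<le> 1"
    and beta: "\<And>t. t \<ge> 1 \<Longrightarrow> 0 < \<beta> t \<and> \<beta> t \<le> 1"
    (* MSGDA *)
    and v1: "v 1 = grady (fs (\<xi> 1)) (x 1) (y 1)"
    and w1: "w 1 = gradx (fs (\<xi> 1)) (x 1) (y 1)"
    and ytil: "\<And>t. t \<ge> 1 \<Longrightarrow> yt (t + 1) = y t + lam *\<^sub>R v t"
    and xtil: "\<And>t. t \<ge> 1 \<Longrightarrow> xt (t + 1) = x t - \<gamma> *\<^sub>R w t"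
    and ystep: "\<And>t. t \<ge> 1 \<Longrightarrow> y (t + 1) = y t + \<eta> t *\<^sub>R (yt (t + 1) - y t)"
    and xstep: "\<And>t. t \<ge> 1 \<Longrightarrow> x (t + 1) = x t + \<eta> t *\<^sub>R (xt (t + 1) - x t)"
    and vstep: "\<And>t. t \<ge> 1 \<Longrightarrow> v (t + 1) = grady (fs (\<xi> (t + 1))) (x (t + 1)) (y (t + 1))
                  + (1 - \<alpha> (t + 1)) *\<^sub>R (v t - grady (fs (\<xi> (t + 1))) (x t) (y t))"
    and wstep: "\<And>t. t \<ge> 1 \<Longrightarrow> w (t + 1) = gradx (fs (\<xi> (t + 1))) (x (t + 1)) (y (t + 1))
                  + (1 - \<beta> (t + 1)) *\<^sub>R (w t - gradx (fs (\<xi> (t + 1))) (x t) (y t))"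
    (* step sizes *)
    and gamma: "0 < \<gamma>" "\<gamma> \<le> lam * \<mu> / (16 * L)"
    and lambda: "\<And>t. t \<ge> 1 \<Longrightarrow> 0 < lam \<and> lam \<le> 1 / (2 * Lf * \<eta> t)"
  shows "\<forall>t\<ge>1. F (x (t + 1)) - f (x (t + 1)) (y (t + 1))
           \<le> (1 - \<eta> t * lam * \<mu> / 2) * (F (x t) - f (x t) (y t))
             + \<eta> t / (8 * \<gamma>) * (norm (xt (t + 1) - x t))\<^sup>2
             - \<eta> t / (4 * lam) * (norm (yt (t + 1) - y t))\<^sup>2
             + \<eta> t * lam * (norm (grady f (x t) (y t) - v t))\<^sup>2"
proof (intro allI impI)
  fix t :: nat assume t: "t \<ge> 1"
  interpret P: prob_space D by (rule D)
  have s1: "\<xi> 1 \<in> space D" using samples by simp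
  have Lf0: "Lf \<ge> 0" using lipschitz_on_nonneg[OF Lxx[OF s1]] .
  have et: "\<eta> t > 0" using eta_pos t by simp
  have lam0: "lam > 0" and lam1: "lam \<le> 1 / (2 * Lf * \<eta> t)" using lambda t by auto
  have Lfp: "Lf > 0"
  proof (rule ccontr)
    assume "\<not> Lf > 0" then have "Lf = 0" using Lf0 by simp
    then show False using lam0 lam1 by simp
  qed
  have gxs: "GDERIV (\<lambda>u. fs s u b) a :> gradx (fs s) a b" if "s \<in> space D" for s a b
    unfolding gradx_def using diffx[OF that] by (rule someI_ex)
  have gys: "GDERIV (\<lambda>u. fs s a u) b :> grady (fs s) a b" if "s \<in> space D" for s a b
    unfolding grady_def using diffy[OF that] by (rule someI_ex)
  have GX: "(\<forall>h. gradx f a b \<bullet> h = (\<integral>s. gradx (fs s) a b \<bullet> h \<partial>D)) \<and> (\<forall>h. integrable D (\<lambda>s. gradx (fs s) a b \<bullet> h))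
      \<and> (\<forall>h. \<bar>f (a + h) b - f a b - gradx f a b \<bullet> h\<bar> \<le> Lf/2 * (norm h)\<^sup>2)" for a b
  proof -
    obtain Gf where G1: "\<forall>u. GDERIV (\<lambda>u. \<integral>s. fs s u b \<partial>D) u :> Gf u"
      and G2: "\<forall>u h. integrable D (\<lambda>s. gradx (fs s) u b \<bullet> h)"
      and G3: "\<forall>u h. Gf u \<bullet> h = (\<integral>s. gradx (fs s) u b \<bullet> h \<partial>D)"
      and G4: "\<forall>u h. \<bar>(\<integral>s. fs s (u + h) b \<partial>D) - (\<integral>s. fs s u b \<partial>D) - Gf u \<bullet> h\<bar> \<le> Lf/2 * (norm h)\<^sup>2"
      using exp_grad[OF D, of "\<lambda>s u. fs s u b" "\<lambda>s u. gradx (fs s) u b" Lf] integ gxs Lxx Lf0 by blast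
    have "gradx f a b = Gf a" unfolding gradx_def f_def expf_def using G1 by (intro gderiv_some) blast
    then show ?thesis using G2 G3 G4 by (simp add: f_def expf_def)
  qed
  have GY: "(\<forall>h. grady f a b \<bullet> h = (\<integral>s. grady (fs s) a b \<bullet> h \<partial>D)) \<and> (\<forall>h. integrable D (\<lambda>s. grady (fs s) a b \<bullet> h))
      \<and> (\<forall>h. \<bar>f a (b + h) - f a b - grady f a b \<bullet> h\<bar> \<le> Lf/2 * (norm h)\<^sup>2)" for a b
  proof -
    obtain Gf where G1: "\<forall>u. GDERIV (\<lambda>u. \<integral>s. fs s a u \<partial>D) u :> Gf u"
      and G2: "\<forall>u h. integrable D (\<lambda>s. grady (fs s) a u \<bullet> h)"
      and G3: "\<forall>u h. Gf u \<bullet> h = (\<integral>s. grady (fs s) a u \<bullet> h \<partial>D)"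
      and G4: "\<forall>u h. \<bar>(\<integral>s. fs s a (u + h) \<partial>D) - (\<integral>s. fs s a u \<partial>D) - Gf u \<bullet> h\<bar> \<le> Lf/2 * (norm h)\<^sup>2"
      using exp_grad[OF D, of "\<lambda>s u. fs s a u" "\<lambda>s u. grady (fs s) a u" Lf] integ gys Lyy Lf0 by blast
    have "grady f a b = Gf b" unfolding grady_def f_def expf_def using G1 by (intro gderiv_some) blast
    then show ?thesis using G2 G3 G4 by (simp add: f_def expf_def)
  qed
  have qx: "\<bar>f (a + h) b - f a b - gradx f a b \<bullet> h\<bar> \<le> Lf/2 * (norm h)\<^sup>2" for a b h
    using GX[of a b] by blast
  have qy: "\<bar>f a (b + h) - f a b - grady f a b \<bullet> h\<bar> \<le> Lf/2 * (norm h)\<^sup>2" for a b h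
    using GY[of a b] by blast
  have lx: "norm (gradx f a b - gradx f a b') \<le> Lf * norm (b - b')" for a b b'
  proof (rule lip_transfer[OF D])
    show "\<forall>h. integrable D (\<lambda>s. gradx (fs s) a b \<bullet> h)" using GX[of a b] by blast
    show "\<forall>h. integrable D (\<lambda>s. gradx (fs s) a b' \<bullet> h)" using GX[of a b'] by blast
    show "\<forall>h. gradx f a b \<bullet> h = (\<integral>s. gradx (fs s) a b \<bullet> h \<partial>D)" using GX[of a b] by blast
    show "\<forall>h. gradx f a b' \<bullet> h = (\<integral>s. gradx (fs s) a b' \<bullet> h \<partial>D)" using GX[of a b'] by blast
    show "norm (gradx (fs s) a b - gradx (fs s) a b') \<le> Lf * norm (b - b')" if "s \<in> space D" for s
      by (rule lipschitz_on_normD[OF Lxy[OF that]]) auto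
    show "0 \<le> Lf * norm (b - b')" using Lf0 by simp
  qed
  have ly: "norm (grady f a b - grady f a' b) \<le> Lf * norm (a - a')" for a a' b
  proof (rule lip_transfer[OF D])
    show "\<forall>h. integrable D (\<lambda>s. grady (fs s) a b \<bullet> h)" using GY[of a b] by blast
    show "\<forall>h. integrable D (\<lambda>s. grady (fs s) a' b \<bullet> h)" using GY[of a' b] by blast
    show "\<forall>h. grady f a b \<bullet> h = (\<integral>s. grady (fs s) a b \<bullet> h \<partial>D)" using GY[of a b] by blast
    show "\<forall>h. grady f a' b \<bullet> h = (\<integral>s. grady (fs s) a' b \<bullet> h \<partial>D)" using GY[of a' b] by blast
    show "norm (grady (fs s) a b - grady (fs s) a' b) \<le> Lf * norm (a - a')" if "s \<in> space D" for s
      by (rule lipschitz_on_normD[OF Lyx[OF that]]) auto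
    show "0 \<le> Lf * norm (a - a')" using Lf0 by simp
  qed
  have Fge: "f a b \<le> F a" for a b
  proof -
    obtain bm where bm: "\<forall>b'. f a b' \<le> f a bm" using argmax by blast
    have "bdd_above (range (f a))" using bm by (auto intro: bdd_aboveI)
    then show ?thesis unfolding F_def maxf_def f_def[symmetric] by (intro cSUP_upper) auto
  qed
  have PL': "2*\<mu>*(F a - f a b) \<le> (norm (grady f a b))\<^sup>2" for a b using PL[of a b] by simp
  define \<rho> where "\<rho> = \<eta> t * lam"
  define d where "d = \<eta> t *\<^sub>R (xt (t + 1) - x t)"
  define B where "B = 1 / (8 * \<gamma> * \<eta> t)"
  have rho0: "\<rho> > 0" using et lam0 by (simp add: \<rho>_def)
  have rhoL: "\<rho> * Lf \<le> 1/2"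
  proof -
    have "lam * (2 * Lf * \<eta> t) \<le> 1" using lam1 Lfp et by (simp add: field_simps)
    then show ?thesis by (simp add: \<rho>_def algebra_simps)
  qed
  have L0: "L > 0"
  proof -
    have "0 < 1 + Lf / \<mu> / 2" using Lfp mu_pos by (simp add: add_pos_nonneg)
    then show ?thesis using Lfp by (simp add: L_def)
  qed
  have Bc: "2 * (Lf * (1 + Lf / \<mu> / 2)) / (\<mu> * \<rho>) \<le> B"
  proof -
    have "16 * L * \<gamma> \<le> lam * \<mu>" using gamma(2) L0 by (simp add: field_simps)
    then have "16 * L * \<gamma> * \<eta> t \<le> lam * \<mu> * \<eta> t" using et by (simp add: mult_right_mono)
    then have "2 * L / (\<mu> * \<rho>) \<le> 1 / (8 * \<gamma> * \<eta> t)"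
      using gamma(1) et mu_pos rho0 lam0 mult_pos_pos[OF mu_pos lam0] by (simp add: field_simps \<rho>_def)
    then show ?thesis by (simp add: L_def B_def)
  qed
  have main: "F (x t + d) - f (x t + d) (y t + \<rho> *\<^sub>R v t) \<le> (1 - \<rho>*\<mu>/2) * (F (x t) - f (x t) (y t)) + B * (norm d)\<^sup>2
            - \<rho>/4 * (norm (v t))\<^sup>2 + \<rho> * (norm (grady f (x t) (y t) - v t))\<^sup>2"
    by (rule main_abs[where gx="gradx f" and gy="grady f", OF Fge qy qx ly lx PL' mu_pos Lfp rho0 rhoL Bc])
  have ex: "x (t + 1) = x t + d" using xstep[OF t] by (simp add: d_def)
  have ey: "y (t + 1) = y t + \<rho> *\<^sub>R v t" using ystep[OF t] ytil[OF t] by (simp add: \<rho>_def)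
  have nd: "(norm d)\<^sup>2 = (\<eta> t)\<^sup>2 * (norm (xt (t + 1) - x t))\<^sup>2"
    by (simp only: d_def norm_scaleR power_mult_distrib power2_abs)
  have e1: "B * (norm d)\<^sup>2 = \<eta> t / (8 * \<gamma>) * (norm (xt (t + 1) - x t))\<^sup>2"
    unfolding nd B_def using et gamma(1) by (simp add: power2_eq_square field_simps)
  have ny: "(norm (yt (t + 1) - y t))\<^sup>2 = lam\<^sup>2 * (norm (v t))\<^sup>2"
    by (simp only: ytil[OF t] add_diff_cancel_left' norm_scaleR power_mult_distrib power2_abs)
  have e2: "\<rho>/4 * (norm (v t))\<^sup>2 = \<eta> t / (4 * lam) * (norm (yt (t + 1) - y t))\<^sup>2"
    unfolding ny \<rho>_def using lam0 by (simp add: power2_eq_square field_simps)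
  show "F (x (t + 1)) - f (x (t + 1)) (y (t + 1))
           \<le> (1 - \<eta> t * lam * \<mu> / 2) * (F (x t) - f (x t) (y t))
             + \<eta> t / (8 * \<gamma>) * (norm (xt (t + 1) - x t))\<^sup>2
             - \<eta> t / (4 * lam) * (norm (yt (t + 1) - y t))\<^sup>2
             + \<eta> t * lam * (norm (grady f (x t) (y t) - v t))\<^sup>2"
    using main unfolding ex ey e1 e2 by (simp add: \<rho>_def)
qed


end
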